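(* Let $p$ be a prime, $\sigma:\mathcal A_m\to\mathcal A_m^*$ a $p$-uniform morphism, $t\in\mathbb{N}^*$, $r=p^t$, and $\alpha\in\mathbb{F}_r$. Then for every positive integer $k$, $$M_{\sigma^{kt}}(\alpha)=\big(M_{\sigma^t}(\alpha)\big)^k.$$
   Context: $\mathcal A_m=\{0,\dots,m-1\}$. For $W=w_0\cdots w_{r'-1}\in\mathcal A_m^*$ and $j\in\mathcal A_m$, $\beta_{W,j}(T)=\sum_{i:\,w_i=j}T^{r'-1-i}\in\mathbb{F}_p[T]$ (zero if $j$ does not occur). For a uniform morphism $\tau$ on $\mathcal A_m$, $M_\tau(T)=(\beta_{\tau(i),j}(T))_{0\le i,j\le m-1}$, and $M_\tau(\alpha)$ is its evaluation at $T=\alpha$. *)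

theory Defs
  imports "HOL-Computational_Algebra.Polynomial" "Jordan_Normal_Form.Matrix"
begin

text \<open>Letters of A_m are naturals < m; words are lists. beta W j is the polynomial
  sum over positions i with w_i = j of T^(|W|-1-i), with integer (0/1) coefficients;
  its image in F_p[T] is obtained by reducing coefficients mod p, and evaluation at an
  element of a field of characteristic p is via the canonical map of_int.\<close>

definition beta :: "nat list \<Rightarrow> nat \<Rightarrow> int poly" where
  "beta W j = (\<Sum>i<length W. if W ! i = j then monom 1 (length W - 1 - i) else 0)"

definition uniform_morphism :: "nat \<Rightarrow> nat \<Rightarrow> (nat \<Rightarrow> nat list) \<Rightarrow> bool" where
  "uniform_morphism m q \<sigma> \<longleftrightarrow> (\<forall>i<m. length (\<sigma> i) = q \<and> set (\<sigma> i) \<subseteq> {..<m})"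

definition morph_word :: "(nat \<Rightarrow> nat list) \<Rightarrow> nat list \<Rightarrow> nat list" where
  "morph_word \<sigma> w = concat (map \<sigma> w)"

definition morph_pow :: "(nat \<Rightarrow> nat list) \<Rightarrow> nat \<Rightarrow> nat \<Rightarrow> nat list" where
  "morph_pow \<sigma> n i = (morph_word \<sigma> ^^ n) [i]"

definition M_eval :: "nat \<Rightarrow> (nat \<Rightarrow> nat list) \<Rightarrow> 'a::comm_ring_1 \<Rightarrow> 'a mat" where
  "M_eval m \<tau> \<alpha> = mat m m (\<lambda>(i, j). poly (map_poly of_int (beta (\<tau> i) j)) \<alpha>)"

end

theory Submission
  imports Defs
begin

lemma finite_field_pow_card:
  fixes x :: "'a::{field, finite}"
  shows "x ^ card (UNIV::'a set) = x"
proof (cases "x = 0")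
  case True
  then show ?thesis by (simp add: power_0_left)
next
  case False
  let ?S = "UNIV - {0::'a}"
  have img: "(*) x ` ?S = ?S"
  proof
    show "(*) x ` ?S \<subseteq> ?S" using False by auto
    show "?S \<subseteq> (*) x ` ?S"
    proof
      fix y :: 'a assume "y \<in> ?S"
      then have "y = x * (inverse x * y)" "inverse x * y \<in> ?S" using False by (auto simp: field_simps)
      then show "y \<in> (*) x ` ?S" by blast
    qed
  qed
  have bij: "bij_betw ((*) x) ?S ?S"
    unfolding bij_betw_def inj_on_def using False img by auto
  have "prod id ?S = prod (id \<circ> (*) x) ?S"
    using prod.reindex[of "(*) x" ?S id] bij by (simp add: bij_betw_def)
  also have "\<dots> = (\<Prod>y\<in>?S. x * y)" by simp
  also have "\<dots> = x ^ card ?S * prod id ?S"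
    by (simp add: prod.distrib)
  finally have eq1: "prod id ?S = x ^ card ?S * prod id ?S" .
  have nz: "prod id ?S \<noteq> 0" by simp
  have c1: "x ^ card ?S = 1" using eq1 nz
    by (metis mult_cancel_right2)
  have fin: "finite ?S" by simp
  have "card ?S = card (UNIV::'a set) - 1"
    by (simp add: card_Diff_singleton)
  moreover have "card (UNIV::'a set) > 0" by (simp add: finite_UNIV_card_ge_0)
  ultimately have c2: "card (UNIV::'a set) = Suc (card ?S)" by simp
  show ?thesis unfolding c2 using c1 by simp
qed

fun evl :: "nat list \<Rightarrow> nat \<Rightarrow> 'a::comm_ring_1 \<Rightarrow> 'a" where
  "evl [] j x = 0"
| "evl (a # W) j x = (if a = j then x ^ length W else 0) + evl W j x"

lemma beta_Nil: "beta [] j = 0" by (simp add: beta_def)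

lemma beta_Cons: "beta (a # W) j = (if a = j then monom 1 (length W) else 0) + beta W j"
proof -
  have "beta (a # W) j = (\<Sum>i<Suc (length W). if (a # W) ! i = j then monom 1 (length (a # W) - 1 - i) else 0)"
    by (simp add: beta_def)
  also have "\<dots> = (if a = j then monom 1 (length W) else 0) + beta W j"
  proof -
    have "(\<Sum>i<length W. if (a # W) ! Suc i = j then monom 1 (length (a # W) - 1 - Suc i) else 0)
        = (\<Sum>i<length W. if W ! i = j then monom 1 (length W - 1 - i) else (0::int poly))"
    proof (rule sum.cong)
      fix i assume "i \<in> {..<length W}"
      have "length (a # W) - 1 - Suc i = length W - 1 - i" by simp
      then show "(if (a # W) ! Suc i = j then monom 1 (length (a # W) - 1 - Suc i) else 0)
        = (if W ! i = j then monom 1 (length W - 1 - i) else (0::int poly))" by simp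
    qed simp
    then show ?thesis unfolding sum.lessThan_Suc_shift by (simp add: beta_def)
  qed
  finally show ?thesis .
qed

lemma map_poly_of_int_add: "map_poly (of_int :: int \<Rightarrow> 'a::comm_ring_1) (p + q) = map_poly of_int p + map_poly of_int q"
  by (rule poly_eqI) (simp add: coeff_map_poly)

lemma poly_beta: "poly (map_poly of_int (beta W j)) x = evl W j x"
proof (induction W)
  case Nil then show ?case by (simp add: beta_Nil)
next
  case (Cons a W)
  have "map_poly (of_int :: int \<Rightarrow> 'a) (beta (a # W) j)
      = (if a = j then monom 1 (length W) else 0) + map_poly of_int (beta W j)"
    unfolding beta_Cons by (simp add: map_poly_of_int_add map_poly_monom)
  then show ?case using Cons by (simp add: poly_monom)
qed

lemma evl_append: "evl (U @ V) j x = x ^ length V * evl U j x + evl V j x"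
  by (induction U) (auto simp: algebra_simps power_add)

lemma evl_concat:
  assumes "set ws \<subseteq> {..<m}" "\<And>h. h < m \<Longrightarrow> length (f h) = L"
  shows "evl (concat (map f ws)) j x = (\<Sum>h<m. evl ws h (x ^ L) * evl (f h) j x)"
  using assms(1)
proof (induction ws)
  case Nil then show ?case by simp
next
  case (Cons w ws)
  have wm: "w < m" using Cons by auto
  have len: "length (concat (map f ws)) = L * length ws"
    using Cons.prems assms(2) by (induction ws) auto
  have "evl (concat (map f (w # ws))) j x
      = x ^ (L * length ws) * evl (f w) j x + (\<Sum>h<m. evl ws h (x ^ L) * evl (f h) j x)"
    using Cons len by (simp add: evl_append)
  also have "x ^ (L * length ws) * evl (f w) j x
      = (\<Sum>h<m. (if w = h then (x ^ L) ^ length ws else 0) * evl (f h) j x)"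
  proof -
    have "(\<Sum>h<m. (if w = h then (x ^ L) ^ length ws else 0) * evl (f h) j x)
        = (\<Sum>h<m. if w = h then (x ^ L) ^ length ws * evl (f h) j x else 0)"
      by (rule sum.cong) auto
    also have "\<dots> = (x ^ L) ^ length ws * evl (f w) j x" using wm by simp
    finally show ?thesis by (simp add: power_mult)
  qed
  finally show ?case by (simp add: algebra_simps sum.distrib)
qed

lemma mw_concat: "morph_word \<sigma> (concat L) = concat (map (morph_word \<sigma>) L)"
  by (induction L) (simp_all add: morph_word_def)

lemma morph_pow_Suc: "morph_pow \<sigma> (Suc n) i = morph_word \<sigma> (morph_pow \<sigma> n i)"
  by (simp add: morph_pow_def)

lemma mw_pow: "(morph_word \<sigma> ^^ n) w = concat (map (morph_pow \<sigma> n) w)"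
proof (induction n arbitrary: w)
  case 0
  have "concat (map (\<lambda>i. [i]) w) = w" by (induction w) auto
  then show ?case by (simp add: morph_pow_def)
next
  case (Suc n)
  have "(morph_word \<sigma> ^^ Suc n) w = morph_word \<sigma> ((morph_word \<sigma> ^^ n) w)"
    by simp
  also have "\<dots> = morph_word \<sigma> (concat (map (morph_pow \<sigma> n) w))"
    by (simp only: Suc)
  also have "\<dots> = concat (map (morph_word \<sigma>) (map (morph_pow \<sigma> n) w))"
    by (rule mw_concat)
  also have "\<dots> = concat (map (morph_pow \<sigma> (Suc n)) w)"
  proof -
    have "morph_pow \<sigma> (Suc n) = (\<lambda>x. morph_word \<sigma> (morph_pow \<sigma> n x))"
      by (rule ext) (rule morph_pow_Suc)
    then show ?thesis by (simp add: comp_def)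
  qed
  finally show ?case .
qed

lemma morph_pow_add:
  "morph_pow \<sigma> (a + b) i = concat (map (morph_pow \<sigma> a) (morph_pow \<sigma> b i))"
proof -
  have "morph_pow \<sigma> (a + b) i = (morph_word \<sigma> ^^ a) (morph_pow \<sigma> b i)"
    unfolding morph_pow_def funpow_add by simp
  also have "\<dots> = concat (map (morph_pow \<sigma> a) (morph_pow \<sigma> b i))"
    by (rule mw_pow)
  finally show ?thesis .
qed

lemma morph_pow_props:
  assumes "uniform_morphism m q \<sigma>" "i < m"
  shows "length (morph_pow \<sigma> n i) = q ^ n \<and> set (morph_pow \<sigma> n i) \<subseteq> {..<m}"
  using assms(2)
proof (induction n arbitrary: i)
  case 0 then show ?case by (simp add: morph_pow_def)
next
  case (Suc n)
  have eq: "morph_pow \<sigma> (Suc n) i = concat (map \<sigma> (morph_pow \<sigma> n i))"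
    by (simp add: morph_pow_def morph_word_def)
  have s: "set (morph_pow \<sigma> n i) \<subseteq> {..<m}" and l: "length (morph_pow \<sigma> n i) = q ^ n"
    using Suc by auto
  have "length (concat (map \<sigma> ws)) = q * length ws" if "set ws \<subseteq> {..<m}" for ws
    using that assms(1) by (induction ws) (auto simp: uniform_morphism_def)
  then have "length (morph_pow \<sigma> (Suc n) i) = q ^ Suc n" using s l eq by simp
  moreover have "set (morph_pow \<sigma> (Suc n) i) \<subseteq> {..<m}"
    using s assms(1) unfolding eq uniform_morphism_def by auto
  ultimately show ?case by blast
qed

lemma M_eval_carrier: "M_eval m \<tau> x \<in> carrier_mat m m"
  by (simp add: M_eval_def)

lemma M_eval_dim[simp]: "dim_row (M_eval m \<tau> x) = m" "dim_col (M_eval m \<tau> x) = m"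
  by (simp_all add: M_eval_def)

lemma M_eval_index: "i < m \<Longrightarrow> j < m \<Longrightarrow> M_eval m \<tau> x $$ (i, j) = evl (\<tau> i) j x"
  by (simp add: M_eval_def poly_beta)

lemma mult_entry:
  fixes A B :: "'a::comm_ring_1 mat"
  assumes "A \<in> carrier_mat m m" "B \<in> carrier_mat m m" "i < m" "j < m"
  shows "(A * B) $$ (i, j) = (\<Sum>h<m. A $$ (i, h) * B $$ (h, j))"
proof -
  have "(A * B) $$ (i, j) = row A i \<bullet> col B j" using assms by simp
  also have "\<dots> = (\<Sum>h\<in>{0..<m}. row A i $ h * col B j $ h)"
    using assms by (simp add: scalar_prod_def)
  also have "\<dots> = (\<Sum>h<m. A $$ (i, h) * B $$ (h, j))"
    using assms by (intro sum.cong) auto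
  finally show ?thesis .
qed

lemma M_eval_add:
  fixes x :: "'a::comm_ring_1"
  assumes "uniform_morphism m q \<sigma>"
  shows "M_eval m (morph_pow \<sigma> (a + b)) x
       = M_eval m (morph_pow \<sigma> b) (x ^ (q ^ a)) * M_eval m (morph_pow \<sigma> a) x"
proof (rule eq_matI)
  fix i j assume ij: "i < dim_row (M_eval m (morph_pow \<sigma> b) (x ^ (q ^ a)) * M_eval m (morph_pow \<sigma> a) x)"
    "j < dim_col (M_eval m (morph_pow \<sigma> b) (x ^ (q ^ a)) * M_eval m (morph_pow \<sigma> a) x)"
  then have i: "i < m" and j: "j < m" by auto
  have "evl (morph_pow \<sigma> (a + b) i) j x
      = (\<Sum>h<m. evl (morph_pow \<sigma> b i) h (x ^ (q ^ a)) * evl (morph_pow \<sigma> a h) j x)"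
    unfolding morph_pow_add
    by (rule evl_concat) (use morph_pow_props[OF assms] i in auto)
  also have "\<dots> = (\<Sum>h<m. M_eval m (morph_pow \<sigma> b) (x ^ (q ^ a)) $$ (i, h) * M_eval m (morph_pow \<sigma> a) x $$ (h, j))"
    using i j by (intro sum.cong) (auto simp: M_eval_index)
  also have "\<dots> = (M_eval m (morph_pow \<sigma> b) (x ^ (q ^ a)) * M_eval m (morph_pow \<sigma> a) x) $$ (i, j)"
    by (rule mult_entry[symmetric]) (use i j M_eval_carrier in auto)
  finally show "M_eval m (morph_pow \<sigma> (a + b)) x $$ (i, j) =
    (M_eval m (morph_pow \<sigma> b) (x ^ (q ^ a)) * M_eval m (morph_pow \<sigma> a) x) $$ (i, j)"
    using i j by (simp add: M_eval_index)
qed (use M_eval_carrier in auto)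

theorem proposition4p14:
  fixes p t m k :: nat and \<sigma> :: "nat \<Rightarrow> nat list" and \<alpha> :: "'a::{field, finite}"
  assumes "prime p"
    and "uniform_morphism m p \<sigma>"
    and "t > 0"
    and "card (UNIV :: 'a set) = p ^ t"
    and "k > 0"
  shows "M_eval m (morph_pow \<sigma> (k * t)) \<alpha> = (M_eval m (morph_pow \<sigma> t) \<alpha>) ^\<^sub>m k"
  using assms(5)
proof (induction k)
  case 0 then show ?case by simp
next
  case (Suc k)
  have pw: "\<alpha> ^ (p ^ t) = \<alpha>" using finite_field_pow_card[of \<alpha>] assms(4) by simp
  show ?case
  proof (cases "k = 0")
    case True
    then show ?thesis using M_eval_carrier[of m "morph_pow \<sigma> t" \<alpha>] by simp
  next
    case False
    have "M_eval m (morph_pow \<sigma> (Suc k * t)) \<alpha> = M_eval m (morph_pow \<sigma> (t + k * t)) \<alpha>"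
      by simp
    also have "\<dots> = M_eval m (morph_pow \<sigma> (k * t)) \<alpha> * M_eval m (morph_pow \<sigma> t) \<alpha>"
      using M_eval_add[OF assms(2), of t "k * t" \<alpha>] pw by simp
    finally show ?thesis using Suc False by simp
  qed
qed

end
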